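(* Let $d\ge 3$. An $\mathcal L_d$-structure is a model of $\mathrm{PQM}_d$ if and only if it is a model of the theory $\mathrm{PQM}'_d$ whose axioms are, for all $p,q\in\mathbb H_d$ and $U\in\mathbb U_d$: ($\top$) $\forall x\,[x:\top]$; ($\neg\bot$) $\exists x\,\neg[x:\bot]$; ($\le$) if $p\le q$: $\forall x\,([x:p]\to[x:q])$; ($\wedge'$) $\forall x\,([x:p]\wedge[x:q]\to[x:p\wedge q])$ (with no compatibility assumption on $p,q$); ($\pi_i$) $\forall x\,([x:p]\to[\pi_q(x):p\,\&\,q])$; ($\pi_e$) $\forall x\,([\pi_q(x):p]\to[x:p\,\delta\,q])$, where $p\,\delta\,q:=q^\bot\vee(p\wedge q)$; ($u_i$) $\forall x\,([x:p]\to[u_U(x):U(p)])$; ($u_e$) $\forall x\,([u_U(x):p]\to[x:U^{-1}(p)])$. In particular, for $d\ge3$, $\mathrm{PQM}_d\models\forall x\,([x:p]\wedge[x:q]\to[x:p\wedge q])$ for all $p,q\in\mathbb H_d$, and $\mathrm{PQM}_d\models\forall x\,([\pi_q(x):p]\to[x:p\,\delta\,q])$ for all $p,q\in\mathbb H_d$.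
   Context: Notation. For $d\ge 1$, $\mathbb H_d$ is the set of complex linear subspaces of $\mathbb C^d$, ordered by inclusion $\le$, with $\top=\mathbb C^d$, $\bot=\{0\}$, $p^\bot$ the orthogonal complement, $p\wedge q=p\cap q$ and $p\vee q=p+q$. $\mathbb U_d$ is the set of unitary operators on $\mathbb C^d$, and for $U\in\mathbb U_d$, $p\in\mathbb H_d$, $U(p)=\{Uv: v\in p\}$. The Sasaki projection is $p\,\&\,q := q\cap(q^\bot+p)$. Subspaces $p,q$ are compatible iff $p=(p\wedge q)\vee(p\wedge q^\bot)$. Language $\mathcal L_d$: a first-order language without equality and without constants, having a unary function symbol $u_U$ for each $U\in\mathbb U_d$, a unary function symbol $\pi_q$ for each $q\in\mathbb H_d$, and a unary relation symbol $[\,\cdot:p]$ for each $p\in\mathbb H_d$. Theory $\mathrm{PQM}_d$ (over $\mathcal L_d$) has the following axioms, for all $p,q\in\mathbb H_d$ and $U\in\mathbb U_d$: ($\neg\bot$) $\exists x\,\neg[x:\bot]$; ($\top$) $\forall x\,[x:\top]$; ($\le$) if $p\le q$: $\forall x\,([x:p]\to[x:q])$; ($\wedge$) if $p,q$ are compatible: $\forall x\,([x:p]\wedge[x:q]\to[x:p\wedge q])$; ($\pi_i$) $\forall x\,([x:p]\to[\pi_q(x):p\,\&\,q])$; ($\pi_c$) if $p\le q$: $\forall x\,([\pi_p(\pi_q(x)):\bot]\to[\pi_p(x):\bot])$; ($\pi_\bot$) $\forall x\,([\pi_q(x):\bot]\to[x:q^\bot])$; ($u_i$) $\forall x\,([x:p]\to[u_U(x):U(p)])$;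 ($u_e$) $\forall x\,([u_U(x):p]\to[x:U^{-1}(p)])$. *)

theory Defs
  imports "HOL-Analysis.Analysis"
begin

text \<open>The ambient space C^d is complex ^ 'n, with d = CARD('n).
  H_d = complex linear subspaces (vec.subspace, scalars acting by (*s)).\<close>

type_synonym 'n cvec = "complex ^ 'n"
type_synonym 'n cmat = "complex ^ 'n ^ 'n"

definition cinner :: "'n::finite cvec \<Rightarrow> 'n cvec \<Rightarrow> complex" where
  "cinner v w = (\<Sum>i\<in>UNIV. v $ i * cnj (w $ i))"

definition Hd :: "'n::finite cvec set set" where
  "Hd = {S. vec.subspace S}"

definition htop :: "'n::finite cvec set" where "htop = UNIV"
definition hbot :: "'n::finite cvec set" where "hbot = {0}"

definition ortho :: "'n::finite cvec set \<Rightarrow> 'n cvec set" where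
  "ortho p = {v. \<forall>w\<in>p. cinner v w = 0}"

definition hjoin :: "'n::finite cvec set \<Rightarrow> 'n cvec set \<Rightarrow> 'n cvec set" where
  "hjoin p q = {x + y | x y. x \<in> p \<and> y \<in> q}"

definition hmeet :: "'n::finite cvec set \<Rightarrow> 'n cvec set \<Rightarrow> 'n cvec set" where
  "hmeet p q = p \<inter> q"

definition sasaki :: "'n::finite cvec set \<Rightarrow> 'n cvec set \<Rightarrow> 'n cvec set" where
  "sasaki p q = hmeet q (hjoin (ortho q) p)"

definition sdelta :: "'n::finite cvec set \<Rightarrow> 'n cvec set \<Rightarrow> 'n cvec set" where
  "sdelta p q = hjoin (ortho q) (hmeet p q)"

definition compatible :: "'n::finite cvec set \<Rightarrow> 'n cvec set \<Rightarrow> bool" where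
  "compatible p q \<longleftrightarrow> p = hjoin (hmeet p q) (hmeet p (ortho q))"

definition adjoint_mat :: "'n::finite cmat \<Rightarrow> 'n cmat" where
  "adjoint_mat U = (\<chi> i j. cnj (U $ j $ i))"

definition unitary :: "'n::finite cmat \<Rightarrow> bool" where
  "unitary U \<longleftrightarrow> U ** adjoint_mat U = mat 1 \<and> adjoint_mat U ** U = mat 1"

definition Ud :: "'n::finite cmat set" where
  "Ud = {U. unitary U}"

definition uimg :: "'n::finite cmat \<Rightarrow> 'n cvec set \<Rightarrow> 'n cvec set" where
  "uimg U p = (\<lambda>v. U *v v) ` p"

text \<open>An L_d-structure with universe the type 'a (nonempty) is given by
  u (interpreting u_U), proj (interpreting pi_q) and R (interpreting [. : p]).
  Only values at unitaries / subspaces matter.\<close>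

definition PQM ::
  "('n::finite cmat \<Rightarrow> 'a \<Rightarrow> 'a) \<Rightarrow> ('n cvec set \<Rightarrow> 'a \<Rightarrow> 'a) \<Rightarrow> ('n cvec set \<Rightarrow> 'a \<Rightarrow> bool) \<Rightarrow> bool"
where
  "PQM u proj R \<longleftrightarrow>
     (\<exists>x. \<not> R hbot x) \<and>
     (\<forall>x. R htop x) \<and>
     (\<forall>p\<in>Hd. \<forall>q\<in>Hd. p \<subseteq> q \<longrightarrow> (\<forall>x. R p x \<longrightarrow> R q x)) \<and>
     (\<forall>p\<in>Hd. \<forall>q\<in>Hd. compatible p q \<longrightarrow> (\<forall>x. R p x \<and> R q x \<longrightarrow> R (hmeet p q) x)) \<and>
     (\<forall>p\<in>Hd. \<forall>q\<in>Hd. \<forall>x. R p x \<longrightarrow> R (sasaki p q) (proj q x)) \<and>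
     (\<forall>p\<in>Hd. \<forall>q\<in>Hd. p \<subseteq> q \<longrightarrow> (\<forall>x. R hbot (proj p (proj q x)) \<longrightarrow> R hbot (proj p x))) \<and>
     (\<forall>q\<in>Hd. \<forall>x. R hbot (proj q x) \<longrightarrow> R (ortho q) x) \<and>
     (\<forall>p\<in>Hd. \<forall>U\<in>Ud. \<forall>x. R p x \<longrightarrow> R (uimg U p) (u U x)) \<and>
     (\<forall>p\<in>Hd. \<forall>U\<in>Ud. \<forall>x. R p (u U x) \<longrightarrow> R (uimg (matrix_inv U) p) x)"

definition PQM' ::
  "('n::finite cmat \<Rightarrow> 'a \<Rightarrow> 'a) \<Rightarrow> ('n cvec set \<Rightarrow> 'a \<Rightarrow> 'a) \<Rightarrow> ('n cvec set \<Rightarrow> 'a \<Rightarrow> bool) \<Rightarrow> bool"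
where
  "PQM' u proj R \<longleftrightarrow>
     (\<forall>x. R htop x) \<and>
     (\<exists>x. \<not> R hbot x) \<and>
     (\<forall>p\<in>Hd. \<forall>q\<in>Hd. p \<subseteq> q \<longrightarrow> (\<forall>x. R p x \<longrightarrow> R q x)) \<and>
     (\<forall>p\<in>Hd. \<forall>q\<in>Hd. \<forall>x. R p x \<and> R q x \<longrightarrow> R (hmeet p q) x) \<and>
     (\<forall>p\<in>Hd. \<forall>q\<in>Hd. \<forall>x. R p x \<longrightarrow> R (sasaki p q) (proj q x)) \<and>
     (\<forall>p\<in>Hd. \<forall>q\<in>Hd. \<forall>x. R p (proj q x) \<longrightarrow> R (sdelta p q) x) \<and>
     (\<forall>p\<in>Hd. \<forall>U\<in>Ud. \<forall>x. R p x \<longrightarrow> R (uimg U p) (u U x)) \<and>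
     (\<forall>p\<in>Hd. \<forall>U\<in>Ud. \<forall>x. R p (u U x) \<longrightarrow> R (uimg (matrix_inv U) p) x)"

end

theory Submission
  imports Defs
begin


lemma cinner_add_left: "cinner (x+y) z = cinner x z + cinner y z"
  by (simp add: cinner_def sum.distrib distrib_right)
lemma cinner_add_right: "cinner x (y+z) = cinner x y + cinner x z"
  by (simp add: cinner_def sum.distrib distrib_left)
lemma cinner_diff_left: "cinner (x-y) z = cinner x z - cinner y z"
  by (simp add: cinner_def sum_subtractf left_diff_distrib)
lemma cinner_diff_right: "cinner x (y-z) = cinner x y - cinner x z"
  by (simp add: cinner_def sum_subtractf right_diff_distrib)
lemma cinner_scale_left: "cinner (c *s x) z = c * cinner x z"
  by (simp add: cinner_def sum_distrib_left mult.assoc)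
lemma cinner_scale_right: "cinner x (c *s z) = cnj c * cinner x z"
  by (simp add: cinner_def sum_distrib_left mult_ac)
lemma cinner_zero_left[simp]: "cinner 0 z = 0" by (simp add: cinner_def)
lemma cinner_zero_right[simp]: "cinner z 0 = 0" by (simp add: cinner_def)
lemma cinner_commute: "cinner y x = cnj (cinner x y)"
  by (simp add: cinner_def mult.commute)
lemma cinner_Re: "Re (cinner v w) = inner v w"
  by (simp add: cinner_def inner_vec_def inner_complex_def Re_sum)
lemma cinner_Im: "Im (cinner v w) = inner v (\<i> *s w)"
  by (simp add: cinner_def inner_vec_def inner_complex_def Im_sum)
lemma cinner_self: "cinner x x = complex_of_real (inner x x)"
  by (simp add: complex_eq_iff cinner_Re cinner_Im inner_vec_def inner_complex_def)
lemma cinner_self_eq0: "cinner x x = 0 \<longleftrightarrow> x = 0"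
  by (simp add: cinner_self)



lemma Hd_iff: "S \<in> Hd \<longleftrightarrow> vec.subspace S" by (simp add: Hd_def)

lemma scaleR_cvec: "(r::real) *\<^sub>R (x::'n::finite cvec) = complex_of_real r *s x"
  by (simp add: vec_eq_iff) (simp add: scaleR_conv_of_real)

lemma csub_real: "vec.subspace S \<Longrightarrow> subspace (S::'n::finite cvec set)"
  unfolding vec.subspace_def subspace_def by (simp add: scaleR_cvec)

lemma csub_span: "vec.subspace S \<Longrightarrow> span (S::'n::finite cvec set) = S"
  by (simp add: csub_real span_eq_iff)

lemma cinner_eq0_real: "inner z w = 0 \<Longrightarrow> inner z (\<i> *s w) = 0 \<Longrightarrow> cinner z w = 0"
  by (simp add: complex_eq_iff cinner_Re cinner_Im)

lemma csub_0: "vec.subspace S \<Longrightarrow> 0 \<in> S" by (simp add: vec.subspace_0)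
lemma csub_add: "vec.subspace S \<Longrightarrow> x \<in> S \<Longrightarrow> y \<in> S \<Longrightarrow> x + y \<in> S" by (simp add: vec.subspace_add)
lemma csub_scale: "vec.subspace S \<Longrightarrow> x \<in> S \<Longrightarrow> c *s x \<in> S" by (simp add: vec.subspace_scale)
lemma csub_diff: "vec.subspace S \<Longrightarrow> x \<in> S \<Longrightarrow> y \<in> S \<Longrightarrow> x - y \<in> S" by (simp add: vec.subspace_diff)

lemma decomp:
  assumes "vec.subspace p"
  obtains y z where "y \<in> p" "z \<in> ortho p" "x = y + z"
proof -
  obtain y z where y: "y \<in> span p" and z: "\<And>w. w \<in> span p \<Longrightarrow> orthogonal z w" and x: "x = y + z"
    using orthogonal_subspace_decomp_exists[of p x] by blast
  have sp: "span p = p" using csub_span[OF assms] .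
  have "z \<in> ortho p"
    unfolding ortho_def
  proof (intro CollectI ballI)
    fix w assume w: "w \<in> p"
    have "inner z w = 0" using z[of w] w sp by (simp add: orthogonal_def)
    moreover have "inner z (\<i> *s w) = 0" using z[of "\<i> *s w"] csub_scale[OF assms w] sp by (simp add: orthogonal_def)
    ultimately show "cinner z w = 0" by (rule cinner_eq0_real)
  qed
  then show ?thesis using that y x sp by blast
qed

lemma ortho_sub: "vec.subspace (ortho p)"
  unfolding vec.subspace_def ortho_def
  by (simp add: cinner_add_left cinner_scale_left)

lemma ortho_perp: "x \<in> p \<Longrightarrow> x \<in> ortho p \<Longrightarrow> x = 0"
  unfolding ortho_def using cinner_self_eq0 by blast

lemma ortho_sym: "x \<in> ortho p \<Longrightarrow> y \<in> p \<Longrightarrow> cinner y x = 0"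
  unfolding ortho_def using cinner_commute[of y x] by simp

lemma ortho_anti: "p \<subseteq> q \<Longrightarrow> ortho q \<subseteq> ortho p"
  unfolding ortho_def by auto

lemma ortho_ortho_sup: "p \<subseteq> ortho (ortho p)"
  using ortho_sym unfolding ortho_def by blast

lemma ortho_ortho:
  assumes "vec.subspace p" shows "ortho (ortho p) = p"
proof
  show "ortho (ortho p) \<subseteq> p"
  proof
    fix x assume x: "x \<in> ortho (ortho p)"
    obtain y z where y: "y \<in> p" and z: "z \<in> ortho p" and xe: "x = y + z" using decomp[OF assms] .
    have "cinner x z = 0" using x z unfolding ortho_def by blast
    moreover have "cinner y z = 0" using ortho_sym[OF ortho_ortho_sup[THEN subsetD, OF y]] z
      by (metis cinner_commute complex_cnj_zero ortho_sym y)
    ultimately have "cinner z z = 0" using xe by (simp add: cinner_add_left)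
    then show "x \<in> p" using xe y by (simp add: cinner_self_eq0)
  qed
qed (rule ortho_ortho_sup)

lemma hbot_sub: "vec.subspace hbot" by (simp add: hbot_def vec.subspace_def)
lemma htop_sub: "vec.subspace htop" by (simp add: htop_def vec.subspace_UNIV)
lemma hmeet_sub: "vec.subspace p \<Longrightarrow> vec.subspace q \<Longrightarrow> vec.subspace (hmeet p q)"
  by (simp add: hmeet_def vec.subspace_inter)
lemma hjoin_eq: "hjoin p q = {x + y | x y. x \<in> p \<and> y \<in> q}" by (simp add: hjoin_def)
lemma hjoin_sub: "vec.subspace p \<Longrightarrow> vec.subspace q \<Longrightarrow> vec.subspace (hjoin p q)"
proof -
  assume p: "vec.subspace p" and q: "vec.subspace q"
  show ?thesis unfolding vec.subspace_def hjoin_def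
  proof (intro conjI ballI allI)
    show "0 \<in> {x + y |x y. x \<in> p \<and> y \<in> q}" using csub_0[OF p] csub_0[OF q] by force
  next
    fix a b assume "a \<in> {x + y |x y. x \<in> p \<and> y \<in> q}" "b \<in> {x + y |x y. x \<in> p \<and> y \<in> q}"
    then obtain x1 y1 x2 y2 where "a = x1 + y1" "b = x2 + y2" "x1 \<in> p" "x2 \<in> p" "y1 \<in> q" "y2 \<in> q" by blast
    moreover have "a + b = (x1 + x2) + (y1 + y2)" using calculation by (simp add: algebra_simps)
    ultimately show "a + b \<in> {x + y |x y. x \<in> p \<and> y \<in> q}" using csub_add[OF p] csub_add[OF q] by blast
  next
    fix c a assume "a \<in> {x + y |x y. x \<in> p \<and> y \<in> q}"
    then obtain x1 y1 where "a = x1 + y1" "x1 \<in> p" "y1 \<in> q" by blast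
    moreover have "c *s a = c *s x1 + c *s y1" using calculation by (simp add: vector_space_over_itself.scale_right_distrib vec.scale_right_distrib)
    ultimately show "c *s a \<in> {x + y |x y. x \<in> p \<and> y \<in> q}" using csub_scale[OF p] csub_scale[OF q] by blast
  qed
qed
lemma sasaki_sub: "vec.subspace p \<Longrightarrow> vec.subspace q \<Longrightarrow> vec.subspace (sasaki p q)"
  by (simp add: sasaki_def hmeet_sub hjoin_sub ortho_sub)
lemma sdelta_sub: "vec.subspace p \<Longrightarrow> vec.subspace q \<Longrightarrow> vec.subspace (sdelta p q)"
  by (simp add: sdelta_def hmeet_sub hjoin_sub ortho_sub)

lemma hjoin_absorb: "vec.subspace p \<Longrightarrow> q \<subseteq> p \<Longrightarrow> 0 \<in> q \<Longrightarrow> hjoin q p = p"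
  unfolding hjoin_def apply auto
   apply (meson csub_add subsetD)
  by (metis add_0)
lemma hjoin_absorb2: "vec.subspace p \<Longrightarrow> q \<subseteq> p \<Longrightarrow> 0 \<in> q \<Longrightarrow> hjoin p q = p"
  unfolding hjoin_def apply auto
   apply (meson csub_add subsetD)
  by (metis add_0_right)
lemma hjoin_bot: "vec.subspace p \<Longrightarrow> hjoin p hbot = p"
  by (simp add: hjoin_absorb2 hbot_def csub_0)

lemma mem_line: "x \<in> vec.span {e} \<longleftrightarrow> (\<exists>k. x = k *s e)"
  by (auto simp: vec.span_singleton)
lemma line_sub: "vec.subspace (vec.span {e})" by (simp add: vec.subspace_span)



definition P :: "'n::finite cvec \<Rightarrow> 'n cvec \<Rightarrow> 'n cvec" where
  "P k x = x - (cinner x k / cinner k k) *s k"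

lemma cinner_self_real: "cnj (cinner k k) = cinner k k"
  by (simp add: cinner_self)
lemma cinner_self_Re: "cinner k k = complex_of_real (Re (cinner k k))"
  by (simp add: cinner_self)
lemma cinner_self_ge0: "inner k k \<ge> 0" by simp
lemma cinner_self_pos: "k \<noteq> 0 \<Longrightarrow> inner k k > 0" by simp

lemma P_orth: "k \<noteq> 0 \<Longrightarrow> cinner (P k x) k = 0"
  by (simp add: P_def cinner_diff_left cinner_scale_left cinner_self_eq0)

lemma P_inner_orth: "cinner y k = 0 \<Longrightarrow> cinner y (P k x) = cinner y x"
  by (simp add: P_def cinner_diff_right cinner_scale_right)

lemma P_norm: assumes "k \<noteq> 0"
  shows "cinner (P k x) (P k x) = cinner x x - complex_of_real ((cmod (cinner x k))^2) / cinner k k"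
proof -
  have K: "cinner k k \<noteq> 0" using assms cinner_self_eq0 by blast
  have "cinner (P k x) (P k x) = cinner (P k x) x"
    using P_inner_orth[of "P k x" k x] P_orth[OF assms]
    by (simp add: P_def cinner_diff_right cinner_scale_right)
  also have "\<dots> = cinner x x - (cinner x k / cinner k k) * cinner k x"
    by (simp add: P_def cinner_diff_left cinner_scale_left)
  also have "cinner k x = cnj (cinner x k)" by (rule cinner_commute)
  also have "(cinner x k / cinner k k) * cnj (cinner x k) = complex_of_real ((cmod (cinner x k))^2) / cinner k k"
    by (simp only: times_divide_eq_left complex_mult_cnj cmod_power2)
  finally show ?thesis .
qed

lemma P_inner: assumes "k \<noteq> 0"
  shows "cinner (P k u) (P k v) = cinner u v - cinner u k * cinner k v / cinner k k"
proof -
  have "cinner (P k u) (P k v) = cinner (P k u) v"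
    using P_inner_orth[of "P k u" k v] P_orth[OF assms] by simp
  also have "\<dots> = cinner u v - cinner u k * cinner k v / cinner k k"
    by (simp add: P_def cinner_diff_left cinner_scale_left)
  finally show ?thesis .
qed

lemma P_scale: "P k (c *s x) = c *s P k x"
  by (simp add: P_def cinner_scale_left vec.scale_right_diff_distrib)
lemma P_add: "P k (x + y) = P k x + P k y"
  by (simp add: P_def cinner_add_left add_divide_distrib vec.scale_left_distrib algebra_simps)

lemma P_linear: "linear (P k)"
  by (rule linearI) (simp_all add: P_add scaleR_cvec P_scale)

lemma sasaki_hyper_sub:
  assumes "k \<noteq> 0"
  shows "sasaki b (ortho (vec.span {k})) \<subseteq> P k ` b"
proof
  fix x assume "x \<in> sasaki b (ortho (vec.span {k}))"
  moreover have "ortho (ortho (vec.span {k})) = vec.span {k}" by (rule ortho_ortho[OF line_sub])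
  ultimately have x: "x \<in> ortho (vec.span {k})" and "x \<in> hjoin (vec.span {k}) b"
    by (auto simp: sasaki_def hmeet_def)
  then obtain a y where xe: "x = a *s k + y" and y: "y \<in> b" by (auto simp: hjoin_def mem_line)
  have "cinner x k = 0" using x vec.span_base[of k "{k}"] by (auto simp: ortho_def)
  then have "P k x = x" by (simp add: P_def)
  have "P k (a *s k) = 0" using assms by (simp add: P_def cinner_scale_left cinner_self_eq0)
  then have "P k x = P k y" using xe by (simp add: P_add)
  moreover note \<open>P k x = x\<close>
  ultimately show "x \<in> P k ` b" using y by auto
qed

lemma sasaki_hyper_line:
  assumes "k \<noteq> 0"
  shows "sasaki (vec.span {u}) (ortho (vec.span {k})) \<subseteq> vec.span {P k u}"
proof
  fix x assume "x \<in> sasaki (vec.span {u}) (ortho (vec.span {k}))"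
  then obtain y where "y \<in> vec.span {u}" "x = P k y" using sasaki_hyper_sub[OF assms, of "vec.span {u}"] by blast
  then obtain c where "x = P k (c *s u)" by (auto simp: mem_line)
  then show "x \<in> vec.span {P k u}" by (auto simp: mem_line P_scale)
qed

lemma line_orth: "cinner u v = 0 \<Longrightarrow> vec.span {u} \<subseteq> ortho (vec.span {v})"
  by (auto simp: mem_line ortho_def cinner_scale_left cinner_scale_right)

lemma line_orth_ortho: "vec.span {u} \<subseteq> ortho (vec.span {v}) \<Longrightarrow> cinner u v = 0"
  using vec.span_base[of u "{u}"] vec.span_base[of v "{v}"] unfolding ortho_def by auto



lemma tri:
  assumes "cinner u e = 0" "cinner u w = 0" "cinner e w = 0"
  shows "cinner (a1 *s u + b1 *s e + c1 *s w) (a2 *s u + b2 *s e + c2 *s w)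
       = a1 * cnj a2 * cinner u u + b1 * cnj b2 * cinner e e + c1 * cnj c2 * cinner w w"
proof -
  have z: "cinner e u = 0" "cinner w u = 0" "cinner w e = 0"
    using assms cinner_commute by (metis complex_cnj_zero)+
  show ?thesis
    by (simp add: cinner_add_left cinner_add_right cinner_scale_left cinner_scale_right assms z algebra_simps)
qed

lemma quad_root:
  fixes a E :: real
  assumes "a > 0" "E \<ge> 8 * a"
  shows "\<exists>t. t \<ge> 1 \<and> a * t * t - E * t + 2 * E = 0"
proof -
  have E: "E > 0" using assms by linarith
  define s where "s = sqrt (E * E - 8 * a * E)"
  have "E * E - 8 * a * E = E * (E - 8 * a)" by (simp add: algebra_simps)
  moreover have "E * (E - 8 * a) \<ge> 0" using assms E by (intro mult_nonneg_nonneg) auto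
  ultimately have D: "E * E - 8 * a * E \<ge> 0" by linarith
  have s2: "s * s = E * E - 8 * a * E" using D by (simp add: s_def)
  have s0: "s \<ge> 0" using D by (simp add: s_def)
  define t where "t = (E + s) / (2 * a)"
  have "t \<ge> E / (2 * a)" using s0 assms by (simp add: t_def divide_right_mono)
  moreover have "E / (2 * a) \<ge> 1" using assms by (simp add: field_simps)
  ultimately have t1: "t \<ge> 1" by linarith
  have "a * t * t - E * t + 2 * E = (s * s - E * E + 8 * a * E) / (4 * a)"
    using assms by (simp add: t_def field_simps)
  also have "\<dots> = 0" using s2 by simp
  finally show ?thesis using t1 by blast
qed

lemma exists_orth:
  fixes u v :: "'n::finite cvec"
  assumes "CARD('n) \<ge> 3"
  obtains w where "w \<noteq> 0" "cinner w u = 0" "cinner w v = 0"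
proof -
  let ?S = "{u, \<i> *s u, v, \<i> *s v}"
  have "?S \<subseteq> span ?S" by (rule span_superset)
  then have "dim ?S \<le> card ?S" by (rule dim_le_card) auto
  also have "card ?S \<le> 4"
  proof -
    have "length [u, \<i> *s u, v, \<i> *s v] = 4" by simp
    then show ?thesis using card_length[of "[u, \<i> *s u, v, \<i> *s v]"] by (simp only: list.set)
  qed
  finally have d4: "dim ?S \<le> 4" .
  have "DIM('n cvec) = CARD('n) * 2" by simp
  then have "dim ?S < DIM('n cvec)" using assms d4 by linarith
  then obtain w where w: "w \<noteq> 0" "\<And>y. y \<in> span ?S \<Longrightarrow> orthogonal w y"
    by (metis orthogonal_to_subspace_exists)
  have o: "inner w y = 0" if "y \<in> ?S" for y
    using w(2)[of y] span_superset[of ?S] that unfolding orthogonal_def by (meson subsetD)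
  have "cinner w u = 0" by (rule cinner_eq0_real) (rule o, simp)+
  moreover have "cinner w v = 0" by (rule cinner_eq0_real) (rule o, simp)+
  ultimately show ?thesis using that w(1) by blast
qed



locale pqm0 =
  fixes R :: "'n::finite cvec set \<Rightarrow> 'a \<Rightarrow> bool" and proj :: "'n cvec set \<Rightarrow> 'a \<Rightarrow> 'a"
  assumes top: "R htop x"
  and mono: "p \<in> Hd \<Longrightarrow> q \<in> Hd \<Longrightarrow> p \<subseteq> q \<Longrightarrow> R p x \<Longrightarrow> R q x"
  and compat: "p \<in> Hd \<Longrightarrow> q \<in> Hd \<Longrightarrow> compatible p q \<Longrightarrow> R p x \<Longrightarrow> R q x \<Longrightarrow> R (hmeet p q) x"
  and pii: "p \<in> Hd \<Longrightarrow> q \<in> Hd \<Longrightarrow> R p x \<Longrightarrow> R (sasaki p q) (proj q x)"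
  and pic: "p \<in> Hd \<Longrightarrow> q \<in> Hd \<Longrightarrow> p \<subseteq> q \<Longrightarrow> R hbot (proj p (proj q x)) \<Longrightarrow> R hbot (proj p x)"
  and pibot: "q \<in> Hd \<Longrightarrow> R hbot (proj q x) \<Longrightarrow> R (ortho q) x"
begin

definition Lp :: "'n cvec set \<Rightarrow> 'n cvec set \<Rightarrow> bool" where
  "Lp a b \<longleftrightarrow> (\<forall>y. R a y \<longrightarrow> R b y \<longrightarrow> R hbot y)"

lemma Lp_sym: "Lp a b \<Longrightarrow> Lp b a" by (auto simp: Lp_def)

lemma orth_contra:
  assumes p: "vec.subspace p" and q: "vec.subspace q" and pq: "p \<subseteq> ortho q"
    and Rp: "R p y" and Rq: "R q y"
  shows "R hbot y"
proof -
  have m: "hmeet p q = hbot"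
    using ortho_perp pq csub_0[OF p] csub_0[OF q] by (auto simp: hmeet_def hbot_def)
  have m2: "hmeet p (ortho q) = p" using pq by (auto simp: hmeet_def)
  have "compatible p q"
    unfolding compatible_def m m2 hbot_def by (rule hjoin_absorb[OF p, symmetric]) (auto simp: csub_0[OF p])
  then have "R (hmeet p q) y" using compat p q Rp Rq by (simp add: Hd_iff)
  then show ?thesis using m by simp
qed

lemma hyper:
  assumes k: "k \<noteq> 0" and cond: "cinner u v * cinner k k = cinner u k * cinner k v"
    and Ru: "R (vec.span {u}) y" and Rv: "R (vec.span {v}) y"
  shows "R (vec.span {k}) y"
proof -
  let ?h = "ortho (vec.span {k})"
  have h: "?h \<in> Hd" by (simp add: Hd_iff ortho_sub)
  have K: "cinner k k \<noteq> 0" using k cinner_self_eq0 by blast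
  have z1: "R (vec.span {P k u}) (proj ?h y)"
    using mono[OF _ _ sasaki_hyper_line[OF k] pii[OF _ h Ru]]
    by (simp add: Hd_iff sasaki_sub line_sub ortho_sub)
  have z2: "R (vec.span {P k v}) (proj ?h y)"
    using mono[OF _ _ sasaki_hyper_line[OF k] pii[OF _ h Rv]]
    by (simp add: Hd_iff sasaki_sub line_sub ortho_sub)
  have "cinner (P k u) (P k v) = 0"
    using P_inner[OF k, of u v] cond K by (simp add: field_simps)
  then have "R hbot (proj ?h y)"
    by (intro orth_contra[OF line_sub line_sub line_orth z1 z2])
  then have "R (ortho ?h) y" using pibot h by blast
  then show ?thesis by (simp only: ortho_ortho[OF line_sub])
qed

lemma split:
  assumes a: "vec.subspace a" and b: "vec.subspace b" and e: "e \<in> a" "e \<noteq> 0"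
    and H1: "Lp (hmeet a (ortho (vec.span {e}))) (sasaki b (ortho (vec.span {e})))"
    and H2: "Lp (vec.span {e}) b"
  shows "Lp a b"
  unfolding Lp_def
proof (intro allI impI)
  fix y assume Ra: "R a y" and Rb: "R b y"
  let ?h = "ortho (vec.span {e})"
  have h: "?h \<in> Hd" by (simp add: Hd_iff ortho_sub)
  have le: "vec.span {e} \<subseteq> a" using e a by (auto simp: mem_line csub_scale)
  have "sasaki a ?h = hmeet ?h (hjoin (vec.span {e}) a)"
    by (simp add: sasaki_def ortho_ortho[OF line_sub])
  also have "\<dots> = hmeet a ?h" using hjoin_absorb[OF a le] vec.span_zero by (auto simp: hmeet_def)
  finally have s: "sasaki a ?h = hmeet a ?h" .
  have "R (hmeet a ?h) (proj ?h y)" using pii[OF _ h Ra] a s by (simp add: Hd_iff)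
  moreover have "R (sasaki b ?h) (proj ?h y)" using pii[OF _ h Rb] b by (simp add: Hd_iff)
  ultimately have "R hbot (proj ?h y)" using H1 by (auto simp: Lp_def)
  then have "R (ortho ?h) y" using pibot h by blast
  then have "R (vec.span {e}) y" by (simp only: ortho_ortho[OF line_sub])
  then show "R hbot y" using H2 Rb by (auto simp: Lp_def)
qed

lemma base:
  assumes u: "u \<noteq> 0" and v: "v \<noteq> 0" and ineq: "9 * (cmod (cinner u v))^2 \<le> inner u u * inner v v"
    and w: "w \<noteq> 0" "cinner w u = 0" "cinner w v = 0"
  shows "Lp (vec.span {u}) (vec.span {v})"
proof (cases "cinner u v = 0")
  case True
  then show ?thesis unfolding Lp_def using orth_contra[OF line_sub line_sub line_orth] by blast
next
  case False
  define lam where "lam = cinner v u / cinner u u"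
  define e2 where "e2 = P u v"
  define U where "U = inner u u"
  define V where "V = inner v v"
  define E where "E = inner e2 e2"
  define W where "W = inner w w"
  define c where "c = cinner u v"
  have U0: "U > 0" using u by (simp add: U_def)
  have W0: "W > 0" using w by (simp add: W_def)
  have cU: "cinner u u = complex_of_real U" by (simp add: U_def cinner_self)
  have cV: "cinner v v = complex_of_real V" by (simp add: V_def cinner_self)
  have cE: "cinner e2 e2 = complex_of_real E" by (simp add: E_def cinner_self)
  have cW: "cinner w w = complex_of_real W" by (simp add: W_def cinner_self)
  have e2u: "cinner e2 u = 0" unfolding e2_def by (rule P_orth[OF u])
  have we2: "cinner w e2 = 0" unfolding e2_def using P_inner_orth[of w u v] w by simp
  have ue2: "cinner u e2 = 0" using e2u cinner_commute[of u e2] by simp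
  have uw: "cinner u w = 0" using w cinner_commute[of u w] by simp
  have e2w: "cinner e2 w = 0" using we2 cinner_commute[of e2 w] by simp
  have vdec: "v = lam *s u + 1 *s e2 + 0 *s w" by (simp add: e2_def P_def lam_def)
  have udec: "u = 1 *s u + 0 *s e2 + 0 *s w" by simp
  have cvu: "cinner v u = cnj c" using cinner_commute[of v u] by (simp add: c_def)
  have "cinner e2 e2 = cinner v v - complex_of_real ((cmod (cinner v u))^2) / cinner u u"
    unfolding e2_def by (rule P_norm[OF u])
  then have Eeq: "E = V - (cmod c)^2 / U" using cE cV cU cvu
    by (metis complex_mod_cnj of_real_diff of_real_divide of_real_eq_iff)
  define a where "a = (cmod c)^2 / U"
  have c0: "c \<noteq> 0" using False by (simp add: c_def)
  have a0: "a > 0" using c0 U0 by (simp add: a_def)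
  have "9 * (cmod c)^2 \<le> U * V" using ineq by (simp add: c_def U_def V_def)
  then have "E \<ge> 8 * a" using U0 by (simp add: Eeq a_def field_simps)
  then obtain t where t1: "t \<ge> 1" and tq: "a * t * t - E * t + 2 * E = 0" using quad_root a0 by blast
  have E0: "E > 0" using \<open>E \<ge> 8 * a\<close> a0 by linarith
  define g where "g = sqrt ((t - 1) * E / W)"
  have gg: "g * g * W = (t - 1) * E" using t1 E0 W0 by (simp add: g_def)
  have lamcnj: "lam * cnj lam * cinner u u = complex_of_real a"
  proof -
    have "lam * cnj lam * cinner u u = cinner v u * cnj (cinner v u) / cinner u u"
      using U0 cU by (simp add: lam_def field_simps)
    also have "\<dots> = complex_of_real a" using cvu cU
      by (simp add: a_def complex_mult_cnj cmod_power2 field_simps)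
    finally show ?thesis .
  qed
  have rg: "complex_of_real g * complex_of_real g * cinner w w = (complex_of_real t - 1) * cinner e2 e2"
    using arg_cong[OF gg, of complex_of_real] cW cE by simp
  have rq: "complex_of_real a * complex_of_real t * complex_of_real t - cinner e2 e2 * complex_of_real t + 2 * cinner e2 e2 = 0"
    using arg_cong[OF tq, of complex_of_real] cE by simp
  define k1 where "k1 = (complex_of_real t * lam) *s u + 1 *s e2 + complex_of_real g *s w"
  define k2 where "k2 = (complex_of_real t * lam) *s u + 1 *s e2 + (- complex_of_real g) *s w"
  note T = tri[OF ue2 uw e2w]
  have k1e: "cinner k1 (0 *s u + 1 *s e2 + 0 *s w) = cinner e2 e2" unfolding k1_def T by simp
  have k2e: "cinner k2 (0 *s u + 1 *s e2 + 0 *s w) = cinner e2 e2" unfolding k2_def T by simp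
  have k1n: "k1 \<noteq> 0" using k1e cE E0 by auto
  have k2n: "k2 \<noteq> 0" using k2e cE E0 by auto
  have h1: "cinner u v * cinner k1 k1 = cinner u k1 * cinner k1 v"
    apply (subst (1 2) udec, subst (1 2) vdec)
    unfolding k1_def T using rg lamcnj by (simp add: algebra_simps) algebra
  have h2: "cinner u v * cinner k2 k2 = cinner u k2 * cinner k2 v"
    apply (subst (1 2) udec, subst (1 2) vdec)
    unfolding k2_def T using rg lamcnj by (simp add: algebra_simps) algebra
  have o12: "cinner k1 k2 = 0"
    unfolding k1_def k2_def T using rg lamcnj rq by (simp add: algebra_simps) algebra
  show ?thesis unfolding Lp_def
  proof (intro allI impI)
    fix y assume Ru: "R (vec.span {u}) y" and Rv: "R (vec.span {v}) y"
    have "R (vec.span {k1}) y" by (rule hyper[OF k1n h1 Ru Rv])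
    moreover have "R (vec.span {k2}) y" by (rule hyper[OF k2n h2 Ru Rv])
    ultimately show "R hbot y" using orth_contra[OF line_sub line_sub line_orth[OF o12]] by blast
  qed
qed

lemma Lp_mono:
  assumes "Lp a b" "a' \<subseteq> a" "b' \<subseteq> b" "vec.subspace a" "vec.subspace b" "vec.subspace a'" "vec.subspace b'"
  shows "Lp a' b'"
  using assms mono unfolding Lp_def Hd_iff by blast

end

locale pqm = pqm0 R proj for R :: "'n::finite cvec set \<Rightarrow> 'a \<Rightarrow> bool" and proj +
  assumes card3: "CARD('n) \<ge> 3"
begin

definition Claim :: "real \<Rightarrow> bool" where
  "Claim M \<longleftrightarrow> (\<forall>u v :: 'n cvec. u \<noteq> 0 \<longrightarrow> v \<noteq> 0 \<longrightarrow>
     (1 + M) * (cmod (cinner u v))^2 \<le> M * inner u u * inner v v \<longrightarrow> Lp (vec.span {u}) (vec.span {v}))"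

lemma claim_base: "Claim (1/8)"
  unfolding Claim_def
proof (intro allI impI)
  fix u v :: "'n cvec"
  assume u: "u \<noteq> 0" and v: "v \<noteq> 0" and i: "(1 + 1/8) * (cmod (cinner u v))^2 \<le> 1/8 * inner u u * inner v v"
  obtain w where "w \<noteq> 0" "cinner w u = 0" "cinner w v = 0" using exists_orth[OF card3] by blast
  moreover have "9 * (cmod (cinner u v))^2 \<le> inner u u * inner v v" using i by simp
  ultimately show "Lp (vec.span {u}) (vec.span {v})" using base u v by blast
qed

lemma claim_step:
  assumes M0: "M > 0" and C: "Claim M"
  shows "Claim (2 * M)"
  unfolding Claim_def
proof (intro allI impI)
  fix u v :: "'n cvec"
  assume u: "u \<noteq> 0" and v: "v \<noteq> 0" and i: "(1 + 2 * M) * (cmod (cinner u v))^2 \<le> 2 * M * inner u u * inner v v"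
  define U where "U = inner u u"
  define V where "V = inner v v"
  define c where "c = cinner u v"
  have U0: "U > 0" using u by (simp add: U_def)
  have V0: "V > 0" using v by (simp add: V_def)
  have cU: "cinner u u = complex_of_real U" by (simp add: U_def cinner_self)
  have cV: "cinner v v = complex_of_real V" by (simp add: V_def cinner_self)
  have i': "(1 + 2 * M) * (cmod c)^2 \<le> 2 * M * U * V" using i by (simp add: U_def V_def c_def)
  have CS: "(cmod c)^2 < U * V"
  proof (rule ccontr)
    assume "\<not> ?thesis"
    then have "(1 + 2 * M) * (U * V) \<le> (1 + 2 * M) * (cmod c)^2" using M0 by (intro mult_left_mono) auto
    then show False using i' mult_pos_pos[OF U0 V0] by (simp add: algebra_simps)
  qed
  obtain w0 where w0: "w0 \<noteq> 0" "cinner w0 u = 0" "cinner w0 v = 0" using exists_orth[OF card3] by blast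
  define W0 where "W0 = inner w0 w0"
  have W00: "W0 > 0" using w0 by (simp add: W0_def)
  define r where "r = sqrt (U / W0)"
  have r0: "r > 0" using U0 W00 by (simp add: r_def)
  define w where "w = complex_of_real r *s w0"
  have cW0: "cinner w0 w0 = complex_of_real W0" by (simp add: W0_def cinner_self)
  have rr: "r * r * W0 = U" using U0 W00 by (simp add: r_def)
  have "cinner w w = complex_of_real (r * r * W0)"
    by (simp add: w_def cinner_scale_left cinner_scale_right cW0)
  then have cW: "cinner w w = complex_of_real U" using rr by simp
  have wu: "cinner w u = 0" using w0 by (simp add: w_def cinner_scale_left)
  have wv: "cinner w v = 0" using w0 by (simp add: w_def cinner_scale_left)
  have uw: "cinner u w = 0" using wu cinner_commute[of u w] by simp
  have vw: "cinner v w = 0" using wv cinner_commute[of v w] by simp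
  define a1 where "a1 = u - w"
  define a2 where "a2 = u + w"
  have a22: "cinner a2 a2 = complex_of_real (2 * U)" using cU cW uw wu
    by (simp add: a2_def cinner_add_left cinner_add_right)
  have a11: "cinner a1 a1 = complex_of_real (2 * U)" using cU cW uw wu
    by (simp add: a1_def cinner_diff_left cinner_diff_right)
  have a12: "cinner a1 a2 = 0" using cU cW uw wu
    by (simp add: a1_def a2_def cinner_diff_left cinner_add_right)
  have a2v: "cinner a2 v = c" using wv by (simp add: a2_def cinner_add_left c_def)
  have a1v: "cinner a1 v = c" using wv by (simp add: a1_def cinner_diff_left c_def)
  have ia2: "inner a2 a2 = 2 * U" by (metis a22 cinner_self of_real_eq_iff)
  have ia1: "inner a1 a1 = 2 * U" by (metis a11 cinner_self of_real_eq_iff)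
  have a2n: "a2 \<noteq> 0" using ia2 U0 by auto
  have a1n: "a1 \<noteq> 0" using ia1 U0 by auto
  define A where "A = hjoin (vec.span {u}) (vec.span {w})"
  have Asub: "vec.subspace A" by (simp add: A_def hjoin_sub line_sub)
  have uA: "vec.span {u} \<subseteq> A"
  proof
    fix x assume "x \<in> vec.span {u}"
    moreover have "x = x + 0" by simp
    ultimately show "x \<in> A" unfolding A_def hjoin_def using vec.span_zero by blast
  qed
  have a2A: "a2 \<in> A" unfolding A_def hjoin_def a2_def using vec.span_base by blast
  have H2: "Lp (vec.span {a2}) (vec.span {v})"
  proof -
    have "(1 + M) * (cmod c)^2 \<le> (1 + 2 * M) * (cmod c)^2" using M0 by (intro mult_right_mono) auto
    also have "\<dots> \<le> M * (2 * U) * V" using i' by (simp add: algebra_simps)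
    finally have "(1 + M) * (cmod c)^2 \<le> M * (2 * U) * V" .
    then have "(1 + M) * (cmod (cinner a2 v))^2 \<le> M * inner a2 a2 * inner v v"
      by (simp add: a2v ia2 V_def)
    then show ?thesis using C a2n v unfolding Claim_def by blast
  qed
  define pv where "pv = P a2 v"
  have a1pv: "cinner a1 pv = c" using P_inner_orth[OF a12] a1v by (simp add: pv_def)
  have "cinner pv pv = cinner v v - complex_of_real ((cmod (cinner v a2))^2) / cinner a2 a2"
    unfolding pv_def by (rule P_norm[OF a2n])
  moreover have "cmod (cinner v a2) = cmod c" using a2v cinner_commute[of v a2] by simp
  ultimately have "cinner pv pv = complex_of_real (V - (cmod c)^2 / (2 * U))" using cV a22 by simp
  then have ipv: "inner pv pv = V - (cmod c)^2 / (2 * U)" by (metis cinner_self of_real_eq_iff)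
  have "(cmod c)^2 < 2 * U * V" using CS mult_pos_pos[OF U0 V0] by (simp add: algebra_simps)
  then have "(cmod c)^2 / (2 * U) < V" using U0 by (simp add: field_simps)
  then have pvn: "pv \<noteq> 0" using ipv by auto
  have eqr: "M * (2 * U) * (V - (cmod c)^2 / (2 * U)) = 2 * M * U * V - M * (cmod c)^2"
    using U0 by (simp add: field_simps)
  have "(1 + M) * (cmod c)^2 = (1 + 2 * M) * (cmod c)^2 - M * (cmod c)^2" by (simp add: algebra_simps)
  then have "(1 + M) * (cmod c)^2 \<le> M * (2 * U) * (V - (cmod c)^2 / (2 * U))"
    using i' eqr by linarith
  then have "(1 + M) * (cmod (cinner a1 pv))^2 \<le> M * inner a1 a1 * inner pv pv"
    by (simp add: a1pv ia1 ipv)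
  then have L1: "Lp (vec.span {a1}) (vec.span {pv})"
    using C a1n pvn unfolding Claim_def by blast
  have sub1: "hmeet A (ortho (vec.span {a2})) \<subseteq> vec.span {a1}"
  proof
    fix x assume x: "x \<in> hmeet A (ortho (vec.span {a2}))"
    then obtain al be where xe: "x = al *s u + be *s w"
      by (auto simp: hmeet_def A_def hjoin_def mem_line)
    have "cinner x a2 = 0" using x vec.span_base[of a2 "{a2}"] by (auto simp: hmeet_def ortho_def)
    then have "(al + be) * complex_of_real U = 0"
      using cU cW uw wu by (simp add: xe a2_def cinner_add_left cinner_add_right cinner_scale_left algebra_simps)
    then have "be = - al" using U0 by (simp add: add_eq_0_iff)
    then have "x = al *s a1" by (simp add: xe a1_def vec.scale_right_diff_distrib)
    then show "x \<in> vec.span {a1}" by (auto simp: mem_line)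
  qed
  have sub2: "sasaki (vec.span {v}) (ortho (vec.span {a2})) \<subseteq> vec.span {pv}"
    unfolding pv_def by (rule sasaki_hyper_line[OF a2n])
  have H1: "Lp (hmeet A (ortho (vec.span {a2}))) (sasaki (vec.span {v}) (ortho (vec.span {a2})))"
    by (rule Lp_mono[OF L1 sub1 sub2]) (simp_all add: line_sub hmeet_sub Asub ortho_sub sasaki_sub)
  have LA: "Lp A (vec.span {v})" by (rule split[OF Asub line_sub a2A a2n H1 H2])
  show "Lp (vec.span {u}) (vec.span {v})"
    by (rule Lp_mono[OF LA uA]) (simp_all add: Asub line_sub)
qed

lemma claim_all: "Claim (2 ^ n / 8)"
proof (induction n)
  case 0 then show ?case using claim_base by simp
next
  case (Suc n)
  have "Claim (2 * (2 ^ n / 8))" by (rule claim_step[OF _ Suc]) simp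
  then show ?case by (simp add: mult.commute)
qed

lemma line_line:
  fixes u v :: "'n cvec"
  assumes u: "u \<noteq> 0" and v: "v \<noteq> 0" and CS: "(cmod (cinner u v))^2 < inner u u * inner v v"
  shows "Lp (vec.span {u}) (vec.span {v})"
proof -
  define D where "D = inner u u * inner v v - (cmod (cinner u v))^2"
  have D0: "D > 0" using CS by (simp add: D_def)
  obtain n :: nat where n: "8 * (cmod (cinner u v))^2 / D < real n" using reals_Archimedean2 by blast
  have "real n < 2 ^ n" using less_exp[of n] by (metis of_nat_less_iff of_nat_numeral of_nat_power)
  with n have "8 * (cmod (cinner u v))^2 / D \<le> 2 ^ n" by linarith
  then have "8 * (cmod (cinner u v))^2 \<le> 2 ^ n * D" using D0 by (simp add: field_simps)
  then have "(1 + 2 ^ n / 8) * (cmod (cinner u v))^2 \<le> 2 ^ n / 8 * inner u u * inner v v"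
    by (simp add: D_def algebra_simps)
  then show ?thesis using claim_all[of n] u v unfolding Claim_def by blast
qed

end


lemma P_in_ortho: "e \<noteq> 0 \<Longrightarrow> P e x \<in> ortho (vec.span {e})"
  by (auto simp: ortho_def mem_line cinner_scale_right P_orth)

lemma P_zero_line: "P e x = 0 \<Longrightarrow> x \<in> vec.span {e}"
  by (auto simp: P_def mem_line)

lemma line_of_meet0:
  assumes a: "vec.subspace a" and e: "e \<in> a" "e \<noteq> 0" and z: "hmeet a (ortho (vec.span {e})) \<subseteq> {0}"
  shows "a = vec.span {e}"
proof
  show "a \<subseteq> vec.span {e}"
  proof
    fix x assume x: "x \<in> a"
    have "P e x \<in> a" unfolding P_def using x e a by (simp add: csub_diff csub_scale)
    then have "P e x = 0" using z P_in_ortho[OF e(2)] by (auto simp: hmeet_def)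
    then show "x \<in> vec.span {e}" by (rule P_zero_line)
  qed
  show "vec.span {e} \<subseteq> a" using e a by (auto simp: mem_line csub_scale)
qed

lemma strict_CS:
  assumes e: "e \<noteq> 0" and f: "f \<noteq> 0" and ind: "vec.span {e} \<inter> vec.span {f} \<subseteq> {0}"
  shows "(cmod (cinner e f))^2 < inner e e * inner f f"
proof (rule ccontr)
  assume "\<not> ?thesis"
  then have ge: "inner e e * inner f f \<le> (cmod (cinner e f))^2" by simp
  have E0: "inner e e > 0" using e by simp
  have "cinner (P e f) (P e f) = cinner f f - complex_of_real ((cmod (cinner f e))^2) / cinner e e"
    by (rule P_norm[OF e])
  moreover have "cmod (cinner f e) = cmod (cinner e f)" using cinner_commute[of f e] by simp
  ultimately have "inner (P e f) (P e f) = inner f f - (cmod (cinner e f))^2 / inner e e"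
    by (metis cinner_self of_real_diff of_real_divide of_real_eq_iff)
  also have "\<dots> \<le> 0" using ge E0 by (simp add: field_simps mult.commute)
  finally have "P e f = 0" by (metis inner_ge_zero inner_eq_zero_iff order_antisym)
  then have "f \<in> vec.span {e}" by (rule P_zero_line)
  then show False using ind f vec.span_base[of f "{f}"] by blast
qed

context pqm0
begin

lemma Lp_zero: "vec.subspace a \<Longrightarrow> a \<subseteq> {0} \<Longrightarrow> Lp a b"
  unfolding Lp_def hbot_def using csub_0 by (metis subset_singletonD empty_iff)

lemma reduce:
  assumes a: "vec.subspace a" and b: "vec.subspace b" and ab: "a \<inter> b \<subseteq> {0}"
    and e: "e \<in> a" "e \<noteq> 0" and x: "x \<in> hmeet a (ortho (vec.span {e}))" "x \<noteq> 0"
    and IH: "\<And>a' b'. vec.subspace a' \<Longrightarrow> vec.subspace b' \<Longrightarrow> a' \<inter> b' \<subseteq> {0} \<Longrightarrow>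
               dim a' + dim b' < dim a + dim b \<Longrightarrow> Lp a' b'"
  shows "Lp a b"
proof -
  let ?h = "ortho (vec.span {e})"
  let ?a1 = "hmeet a ?h"
  let ?b1 = "sasaki b ?h"
  have a1: "vec.subspace ?a1" by (simp add: a hmeet_sub ortho_sub)
  have b1: "vec.subspace ?b1" by (simp add: b sasaki_sub ortho_sub)
  have le: "vec.span {e} \<subseteq> a" using e a by (auto simp: mem_line csub_scale)
  have es: "e \<in> vec.span {e}" by (simp add: vec.span_base)
  have eperp: "e \<notin> ?h" using ortho_perp[OF es] e(2) by blast
  have d1: "dim ?a1 < dim a"
  proof (rule dim_psubset)
    have s1: "span ?a1 = ?a1" by (rule csub_span[OF a1])
    have s2: "span a = a" by (rule csub_span[OF a])
    show "span ?a1 \<subset> span a" unfolding s1 s2 using e eperp by (auto simp: hmeet_def)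
  qed
  have d2: "dim ?b1 \<le> dim b"
  proof -
    have "dim ?b1 \<le> dim (P e ` b)" by (rule dim_subset[OF sasaki_hyper_sub[OF e(2)]])
    also have "\<dots> \<le> dim b" by (rule dim_image_le[OF P_linear])
    finally show ?thesis .
  qed
  have i1: "?a1 \<inter> ?b1 \<subseteq> {0}"
  proof
    fix z assume z: "z \<in> ?a1 \<inter> ?b1"
    then have za: "z \<in> a" and zh: "z \<in> ?h" and "z \<in> hjoin (ortho ?h) b"
      by (auto simp: hmeet_def sasaki_def)
    then obtain k bb where zk: "z = k *s e + bb" and bb: "bb \<in> b"
      by (auto simp: ortho_ortho[OF line_sub] hjoin_def mem_line)
    have "bb = z - k *s e" using zk by simp
    then have "bb \<in> a" using za e a by (simp add: csub_diff csub_scale)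
    then have "bb = 0" using bb ab by blast
    then have "z \<in> vec.span {e}" using zk by (auto simp: mem_line)
    then show "z \<in> {0}" using ortho_perp zh by blast
  qed
  have H1: "Lp ?a1 ?b1" using IH[OF a1 b1 i1] d1 d2 by linarith
  have d3: "dim (vec.span {e}) < dim a"
  proof (rule dim_psubset)
    have x1: "x \<notin> vec.span {e}" using ortho_perp[of x "vec.span {e}"] x by (auto simp: hmeet_def)
    have x2: "x \<in> a" using x by (auto simp: hmeet_def)
    have s1: "span (vec.span {e}) = vec.span {e}" by (rule csub_span[OF line_sub])
    have s2: "span a = a" by (rule csub_span[OF a])
    show "span (vec.span {e}) \<subset> span a" unfolding s1 s2 using le x1 x2 by blast
  qed
  have i2: "vec.span {e} \<inter> b \<subseteq> {0}" using le ab by blast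
  have "dim (vec.span {e}) + dim b < dim a + dim b" using d3 by simp
  then have H2: "Lp (vec.span {e}) b" by (rule IH[OF line_sub b i2])
  show ?thesis by (rule split[OF a b e H1 H2])
qed

end

context pqm
begin

lemma L_gen:
  "vec.subspace a \<Longrightarrow> vec.subspace b \<Longrightarrow> a \<inter> b \<subseteq> {0} \<Longrightarrow> Lp a b"
proof (induction "dim a + dim b" arbitrary: a b rule: less_induct)
  case less
  note a = less.prems(1) and b = less.prems(2) and ab = less.prems(3)
  have IH: "\<And>a' b'. vec.subspace a' \<Longrightarrow> vec.subspace b' \<Longrightarrow> a' \<inter> b' \<subseteq> {0} \<Longrightarrow>
               dim a' + dim b' < dim a + dim b \<Longrightarrow> Lp a' b'" using less.hyps by blast
  show ?case
  proof (cases "a \<subseteq> {0}")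
    case True then show ?thesis using Lp_zero a by blast
  next
    case False
    then obtain e where e: "e \<in> a" "e \<noteq> 0" by blast
    show ?thesis
    proof (cases "hmeet a (ortho (vec.span {e})) \<subseteq> {0}")
      case False
      then obtain x where "x \<in> hmeet a (ortho (vec.span {e}))" "x \<noteq> 0" by blast
      then show ?thesis using reduce[OF a b ab e] IH by blast
    next
      case True
      then have ae: "a = vec.span {e}" by (rule line_of_meet0[OF a e])
      show ?thesis
      proof (cases "b \<subseteq> {0}")
        case True then show ?thesis using Lp_zero b Lp_sym by blast
      next
        case False
        then obtain f where f: "f \<in> b" "f \<noteq> 0" by blast
        show ?thesis
        proof (cases "hmeet b (ortho (vec.span {f})) \<subseteq> {0}")
          case False
          then obtain x where x: "x \<in> hmeet b (ortho (vec.span {f}))" "x \<noteq> 0" by blast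
          have "Lp b a"
          proof (rule reduce[OF b a _ f x])
            show "b \<inter> a \<subseteq> {0}" using ab by blast
            fix a' b' :: "'n cvec set" assume "vec.subspace a'" "vec.subspace b'" "a' \<inter> b' \<subseteq> {0}" "dim a' + dim b' < dim b + dim a"
            then show "Lp a' b'" using IH by (simp add: add.commute)
          qed
          then show ?thesis by (rule Lp_sym)
        next
          case True
          then have bf: "b = vec.span {f}" by (rule line_of_meet0[OF b f])
          have "(cmod (cinner e f))^2 < inner e e * inner f f"
            using strict_CS[OF e(2) f(2)] ab ae bf by blast
          then show ?thesis using line_line[OF e(2) f(2)] ae bf by simp
        qed
      qed
    qed
  qed
qed

end


lemma hjoin_subset: "vec.subspace c \<Longrightarrow> A \<subseteq> c \<Longrightarrow> B \<subseteq> c \<Longrightarrow> hjoin A B \<subseteq> c"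
proof
  fix z assume c: "vec.subspace c" and A: "A \<subseteq> c" and B: "B \<subseteq> c" and z: "z \<in> hjoin A B"
  then obtain x y where "z = x + y" "x \<in> A" "y \<in> B" by (auto simp: hjoin_def)
  then show "z \<in> c" using csub_add[OF c] A B by auto
qed

lemma hjoin_UNIV: "vec.subspace A \<Longrightarrow> hjoin A UNIV = UNIV"
proof -
  assume A: "vec.subspace A"
  have "z \<in> hjoin A UNIV" for z unfolding hjoin_def
  proof -
    have "z = 0 + z" by simp
    then show "z \<in> {x + y |x y. x \<in> A \<and> y \<in> UNIV}" using csub_0[OF A] by blast
  qed
  then show ?thesis by blast
qed

lemma sdelta_bot: "vec.subspace p \<Longrightarrow> sdelta hbot p = ortho p"
  unfolding sdelta_def
proof -
  assume p: "vec.subspace p"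
  have "hmeet hbot p = hbot" using csub_0[OF p] by (auto simp: hmeet_def hbot_def)
  then show "hjoin (ortho p) (hmeet hbot p) = ortho p" by (simp add: hjoin_bot ortho_sub)
qed

lemma ortho_meet_sub:
  assumes q: "vec.subspace q" and m: "vec.subspace m" and mq: "m \<subseteq> q"
  shows "ortho (hmeet q (ortho m)) \<subseteq> hjoin (ortho q) m"
proof
  fix x assume x: "x \<in> ortho (hmeet q (ortho m))"
  obtain x1 x2 where x1: "x1 \<in> q" and x2: "x2 \<in> ortho q" and xe: "x = x1 + x2" using decomp[OF q] .
  obtain m1 r where m1: "m1 \<in> m" and r: "r \<in> ortho m" and x1e: "x1 = m1 + r" using decomp[OF m] .
  have m1q: "m1 \<in> q" using m1 mq by blast
  have "r = x1 - m1" using x1e by simp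
  then have rq: "r \<in> q" using csub_diff[OF q x1 m1q] by simp
  have rs: "r \<in> hmeet q (ortho m)" using r rq by (simp add: hmeet_def)
  have "cinner x r = 0" using x rs unfolding ortho_def by blast
  moreover have "cinner x2 r = 0" using x2 rq unfolding ortho_def by blast
  moreover have "cinner m1 r = 0" by (rule ortho_sym[OF r m1])
  ultimately have "cinner r r = 0" using xe x1e by (simp add: cinner_add_left)
  then have "r = 0" by (simp add: cinner_self_eq0)
  then have "x = x2 + m1" using xe x1e by simp
  then show "x \<in> hjoin (ortho q) m" using x2 m1 by (auto simp: hjoin_def)
qed

lemma fwd:
  fixes u :: "'n::finite cmat \<Rightarrow> 'a \<Rightarrow> 'a"
    and proj :: "'n cvec set \<Rightarrow> 'a \<Rightarrow> 'a"
    and R :: "'n cvec set \<Rightarrow> 'a \<Rightarrow> bool"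
  assumes card: "CARD('n) \<ge> 3" and H: "PQM u proj R"
  shows "PQM' u proj R"
proof -
  have H1: "\<exists>x. \<not> R hbot x"
    using H unfolding PQM_def by (elim conjE) assumption
  have H2: "\<forall>x. R htop x"
    using H unfolding PQM_def by (elim conjE) assumption
  have H3: "\<forall>p\<in>Hd. \<forall>q\<in>Hd. p \<subseteq> q \<longrightarrow> (\<forall>x. R p x \<longrightarrow> R q x)"
    using H unfolding PQM_def by (elim conjE) assumption
  have H4: "\<forall>p\<in>Hd. \<forall>q\<in>Hd. compatible p q \<longrightarrow> (\<forall>x. R p x \<and> R q x \<longrightarrow> R (hmeet p q) x)"
    using H unfolding PQM_def by (elim conjE) assumption
  have H5: "\<forall>p\<in>Hd. \<forall>q\<in>Hd. \<forall>x. R p x \<longrightarrow> R (sasaki p q) (proj q x)"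
    using H unfolding PQM_def by (elim conjE) assumption
  have H6: "\<forall>p\<in>Hd. \<forall>q\<in>Hd. p \<subseteq> q \<longrightarrow> (\<forall>x. R hbot (proj p (proj q x)) \<longrightarrow> R hbot (proj p x))"
    using H unfolding PQM_def by (elim conjE) assumption
  have H7: "\<forall>q\<in>Hd. \<forall>x. R hbot (proj q x) \<longrightarrow> R (ortho q) x"
    using H unfolding PQM_def by (elim conjE) assumption
  have H8: "\<forall>p\<in>Hd. \<forall>U\<in>Ud. \<forall>x. R p x \<longrightarrow> R (uimg U p) (u U x)"
    using H unfolding PQM_def by (elim conjE) assumption
  have H9: "\<forall>p\<in>Hd. \<forall>U\<in>Ud. \<forall>x. R p (u U x) \<longrightarrow> R (uimg (matrix_inv U) p) x"
    using H unfolding PQM_def by (elim conjE) assumption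
  interpret pqm R proj
  proof unfold_locales
    show "R htop x" for x using H2 by (rule spec)
    show "R q x" if "p \<in> Hd" "q \<in> Hd" "p \<subseteq> q" "R p x" for p q x by (rule H3[rule_format, OF that])
    show "R (hmeet p q) x" if "p \<in> Hd" "q \<in> Hd" "compatible p q" "R p x" "R q x" for p q x by (rule H4[rule_format, OF that(1-3) conjI[OF that(4-5)]])
    show "R (sasaki p q) (proj q x)" if "p \<in> Hd" "q \<in> Hd" "R p x" for p q x by (rule H5[rule_format, OF that])
    show "R hbot (proj p x)" if "p \<in> Hd" "q \<in> Hd" "p \<subseteq> q" "R hbot (proj p (proj q x))" for p q x by (rule H6[rule_format, OF that])
    show "R (ortho q) x" if "q \<in> Hd" "R hbot (proj q x)" for q x by (rule H7[rule_format, OF that])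
    show "3 \<le> CARD('n)" by (rule card)
  qed
  have meet: "R (hmeet p q) x" if p: "p \<in> Hd" and q: "q \<in> Hd" and Rp: "R p x" and Rq: "R q x" for p q x
  proof -
    have ps: "vec.subspace p" and qs: "vec.subspace q" using p q by (auto simp: Hd_iff)
    define m where "m = hmeet p q"
    have ms: "vec.subspace m" by (simp add: m_def hmeet_sub ps qs)
    define t where "t = ortho m"
    have ts: "vec.subspace t" by (simp add: t_def ortho_sub)
    have ot: "ortho t = m" by (simp add: t_def ortho_ortho[OF ms])
    have "sasaki p t = hmeet t p"
      unfolding sasaki_def ot using hjoin_absorb[OF ps, of m] csub_0[OF ms] by (auto simp: m_def hmeet_def)
    then have z1: "R (hmeet t p) (proj t x)" using pii[of p t x] Rp p ts by (simp add: Hd_iff)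
    have "sasaki q t = hmeet t q"
      unfolding sasaki_def ot using hjoin_absorb[OF qs, of m] csub_0[OF ms] by (auto simp: m_def hmeet_def)
    then have z2: "R (hmeet t q) (proj t x)" using pii[of q t x] Rq q ts by (simp add: Hd_iff)
    have "hmeet t p \<inter> hmeet t q \<subseteq> {0}"
      using ortho_perp[of _ m] by (auto simp: hmeet_def t_def m_def)
    then have "Lp (hmeet t p) (hmeet t q)" by (intro L_gen) (simp_all add: hmeet_sub ts ps qs)
    then have "R hbot (proj t x)" using z1 z2 by (auto simp: Lp_def)
    then have "R (ortho t) x" using pibot ts by (simp add: Hd_iff)
    then show ?thesis by (simp add: ot m_def)
  qed
  have pie: "R (sdelta p q) x" if p: "p \<in> Hd" and q: "q \<in> Hd" and Rp: "R p (proj q x)" for p q x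
  proof -
    have ps: "vec.subspace p" and qs: "vec.subspace q" using p q by (auto simp: Hd_iff)
    have sq: "sasaki htop q = q" by (simp add: sasaki_def htop_def hmeet_def hjoin_UNIV[OF ortho_sub])
    have "R (sasaki htop q) (proj q x)" by (rule pii[OF _ q top]) (simp add: Hd_iff htop_sub)
    then have Rq: "R q (proj q x)" by (simp only: sq)
    have Rm: "R (hmeet p q) (proj q x)" by (rule meet[OF p q Rp Rq])
    define m where "m = hmeet p q"
    have ms: "vec.subspace m" by (simp add: m_def hmeet_sub ps qs)
    define s where "s = hmeet q (ortho m)"
    have ss: "vec.subspace s" by (simp add: s_def hmeet_sub qs ortho_sub)
    have sm: "s \<subseteq> ortho m" by (simp add: s_def hmeet_def)
    have sqq: "s \<subseteq> q" by (simp add: s_def hmeet_def)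
    have ms2: "m \<subseteq> ortho s" by (rule subset_trans[OF ortho_ortho_sup ortho_anti[OF sm]])
    have hj: "hjoin (ortho s) m \<subseteq> ortho s" by (rule hjoin_subset[OF ortho_sub subset_refl ms2])
    have sb: "sasaki m s \<subseteq> hbot"
    proof
      fix z assume "z \<in> sasaki m s"
      then have "z \<in> s" "z \<in> ortho s" using hj by (auto simp: sasaki_def hmeet_def)
      then have "z = 0" by (rule ortho_perp)
      then show "z \<in> hbot" by (simp add: hbot_def)
    qed
    have sHd: "s \<in> Hd" and mHd: "m \<in> Hd" using ss ms by (simp_all add: Hd_iff)
    have "R (sasaki m s) (proj s (proj q x))" by (rule pii[OF mHd sHd]) (simp add: Rm[folded m_def])
    then have "R hbot (proj s (proj q x))"
      by (rule mono[OF _ _ sb, rotated 2]) (simp_all add: Hd_iff sasaki_sub ms ss hbot_sub)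
    then have "R hbot (proj s x)" by (rule pic[OF sHd q sqq])
    then have Ros: "R (ortho s) x" by (rule pibot[OF sHd])
    have "ortho s \<subseteq> sdelta p q"
      unfolding s_def sdelta_def m_def[symmetric] by (rule ortho_meet_sub[OF qs ms]) (simp add: m_def hmeet_def)
    note sub = this
    show ?thesis
      by (rule mono[OF _ _ sub Ros]) (simp_all add: Hd_iff ortho_sub sdelta_sub ps qs)
  qed
  show ?thesis unfolding PQM'_def
  proof (intro conjI)
    show "\<forall>x. R htop x" by (rule H2)
    show "\<exists>x. \<not> R hbot x" by (rule H1)
    show "\<forall>p\<in>Hd. \<forall>q\<in>Hd. p \<subseteq> q \<longrightarrow> (\<forall>x. R p x \<longrightarrow> R q x)" by (rule H3)
    show "\<forall>p\<in>Hd. \<forall>q\<in>Hd. \<forall>x. R p x \<and> R q x \<longrightarrow> R (hmeet p q) x"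
      by (intro ballI allI impI, elim conjE, rule meet, assumption+)
    show "\<forall>p\<in>Hd. \<forall>q\<in>Hd. \<forall>x. R p x \<longrightarrow> R (sasaki p q) (proj q x)" by (rule H5)
    show "\<forall>p\<in>Hd. \<forall>q\<in>Hd. \<forall>x. R p (proj q x) \<longrightarrow> R (sdelta p q) x"
      by (intro ballI allI impI, rule pie, assumption+)
    show "\<forall>p\<in>Hd. \<forall>U\<in>Ud. \<forall>x. R p x \<longrightarrow> R (uimg U p) (u U x)" by (rule H8)
    show "\<forall>p\<in>Hd. \<forall>U\<in>Ud. \<forall>x. R p (u U x) \<longrightarrow> R (uimg (matrix_inv U) p) x" by (rule H9)
  qed
qed

lemma bwd:
  fixes u :: "'n::finite cmat \<Rightarrow> 'a \<Rightarrow> 'a"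
    and proj :: "'n cvec set \<Rightarrow> 'a \<Rightarrow> 'a"
    and R :: "'n cvec set \<Rightarrow> 'a \<Rightarrow> bool"
  assumes H: "PQM' u proj R"
  shows "PQM u proj R"
proof -
  have H1: "\<forall>x. R htop x"
    using H unfolding PQM'_def by (elim conjE) assumption
  have H2: "\<exists>x. \<not> R hbot x"
    using H unfolding PQM'_def by (elim conjE) assumption
  have H3: "\<forall>p\<in>Hd. \<forall>q\<in>Hd. p \<subseteq> q \<longrightarrow> (\<forall>x. R p x \<longrightarrow> R q x)"
    using H unfolding PQM'_def by (elim conjE) assumption
  have H4: "\<forall>p\<in>Hd. \<forall>q\<in>Hd. \<forall>x. R p x \<and> R q x \<longrightarrow> R (hmeet p q) x"
    using H unfolding PQM'_def by (elim conjE) assumption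
  have H5: "\<forall>p\<in>Hd. \<forall>q\<in>Hd. \<forall>x. R p x \<longrightarrow> R (sasaki p q) (proj q x)"
    using H unfolding PQM'_def by (elim conjE) assumption
  have H6: "\<forall>p\<in>Hd. \<forall>q\<in>Hd. \<forall>x. R p (proj q x) \<longrightarrow> R (sdelta p q) x"
    using H unfolding PQM'_def by (elim conjE) assumption
  have H7: "\<forall>p\<in>Hd. \<forall>U\<in>Ud. \<forall>x. R p x \<longrightarrow> R (uimg U p) (u U x)"
    using H unfolding PQM'_def by (elim conjE) assumption
  have H8: "\<forall>p\<in>Hd. \<forall>U\<in>Ud. \<forall>x. R p (u U x) \<longrightarrow> R (uimg (matrix_inv U) p) x"
    using H unfolding PQM'_def by (elim conjE) assumption
  have mono: "\<And>p q x. p \<in> Hd \<Longrightarrow> q \<in> Hd \<Longrightarrow> p \<subseteq> q \<Longrightarrow> R p x \<Longrightarrow> R q x"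
    using H3 by blast
  have pii: "\<And>p q x. p \<in> Hd \<Longrightarrow> q \<in> Hd \<Longrightarrow> R p x \<Longrightarrow> R (sasaki p q) (proj q x)"
    using H5 by blast
  have pie: "\<And>p q x. p \<in> Hd \<Longrightarrow> q \<in> Hd \<Longrightarrow> R p (proj q x) \<Longrightarrow> R (sdelta p q) x"
    using H6 by blast
  have hb: "hbot \<in> Hd" by (simp add: Hd_iff hbot_sub)
  have pib: "R (ortho q) x" if q: "q \<in> Hd" and r: "R hbot (proj q x)" for q x
  proof -
    have qs: "vec.subspace q" using q by (simp add: Hd_iff)
    show ?thesis using pie[OF hb q r] by (simp add: sdelta_bot[OF qs])
  qed
  have pic: "R hbot (proj p x)" if p: "p \<in> Hd" and q: "q \<in> Hd" and pq: "p \<subseteq> q"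
    and r: "R hbot (proj p (proj q x))" for p q x
  proof -
    have ps: "vec.subspace p" and qs: "vec.subspace q" using p q by (auto simp: Hd_iff)
    have "R (ortho p) (proj q x)" using pib[OF p r] .
    then have r2: "R (sdelta (ortho p) q) x" using pie[of "ortho p" q x] q by (simp add: Hd_iff ortho_sub)
    define S where "S = sdelta (ortho p) q"
    have Ss: "vec.subspace S" by (simp add: S_def sdelta_sub ortho_sub qs)
    have "S \<subseteq> ortho p" unfolding S_def sdelta_def
      by (rule hjoin_subset[OF ortho_sub]) (auto simp: hmeet_def dest: ortho_anti[OF pq, THEN subsetD])
    then have "hjoin (ortho p) S \<subseteq> ortho p" by (intro hjoin_subset) (simp_all add: ortho_sub)
    then have "sasaki S p \<subseteq> hbot"
      using ortho_perp[of _ p] csub_0[OF ps] by (auto simp: sasaki_def hmeet_def hbot_def)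
    moreover have "R (sasaki S p) (proj p x)" using pii[of S p x] r2 Ss p by (simp add: Hd_iff S_def)
    ultimately show ?thesis using mono[of "sasaki S p" hbot] by (simp add: Hd_iff sasaki_sub Ss ps hbot_sub)
  qed
  show ?thesis unfolding PQM_def
  proof (intro conjI)
    show "\<exists>x. \<not> R hbot x" by (rule H2)
    show "\<forall>x. R htop x" by (rule H1)
    show "\<forall>p\<in>Hd. \<forall>q\<in>Hd. p \<subseteq> q \<longrightarrow> (\<forall>x. R p x \<longrightarrow> R q x)" by (rule H3)
    show "\<forall>p\<in>Hd. \<forall>q\<in>Hd. compatible p q \<longrightarrow> (\<forall>x. R p x \<and> R q x \<longrightarrow> R (hmeet p q) x)" using H4 by blast
    show "\<forall>p\<in>Hd. \<forall>q\<in>Hd. \<forall>x. R p x \<longrightarrow> R (sasaki p q) (proj q x)" by (rule H5)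
    show "\<forall>p\<in>Hd. \<forall>q\<in>Hd. p \<subseteq> q \<longrightarrow> (\<forall>x. R hbot (proj p (proj q x)) \<longrightarrow> R hbot (proj p x))" using pic by blast
    show "\<forall>q\<in>Hd. \<forall>x. R hbot (proj q x) \<longrightarrow> R (ortho q) x" using pib by blast
    show "\<forall>p\<in>Hd. \<forall>U\<in>Ud. \<forall>x. R p x \<longrightarrow> R (uimg U p) (u U x)" by (rule H7)
    show "\<forall>p\<in>Hd. \<forall>U\<in>Ud. \<forall>x. R p (u U x) \<longrightarrow> R (uimg (matrix_inv U) p) x" by (rule H8)
  qed
qed

theorem mainTheorem16:
  fixes u :: "'n::finite cmat \<Rightarrow> 'a \<Rightarrow> 'a"
    and proj :: "'n cvec set \<Rightarrow> 'a \<Rightarrow> 'a"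
    and R :: "'n cvec set \<Rightarrow> 'a \<Rightarrow> bool"
  assumes "CARD('n) \<ge> 3"
  shows "PQM u proj R \<longleftrightarrow> PQM' u proj R"
  using fwd[OF assms] bwd by blast


end
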